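(* Let $C>0$ be a sufficiently large constant, let $\frac{C\log n}{n}\le p\le n^{-2/3}$, let $0<\alpha\le 1/100$, and let $G\sim G(n,p)$. Let $B$ be the set of vertices of $G$ with degree at least $pn+(1-\alpha)\sqrt{2pn\log n}$. Then with high probability both of the following hold: (1) $|B|\le n^{1/10}$; (2) every vertex $v$ has at most $100$ neighbours in $B\cup N(B\setminus\{v\})$, where moreover $100\le \sqrt{2pn\log n}/10^{20}$.
   Context: $G(n,p)$ is the binomial random graph on $n$ vertices with edge probability $p$; "with high probability" means with probability tending to $1$ as $n\to\infty$. For a set $S$ of vertices, $N(S)=N_G(S)$ denotes the external neighbourhood of $S$ in $G$, i.e. the set of vertices not in $S$ having a neighbour in $S$. *)

theory Defs
  imports "HOL-Probability.Probability"
begin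

text \<open>Vertex set of G(n,p) is {0..<n}; a graph is encoded by the indicator
  function of its edge set, an edge being a 2-element set {i,j} with i,j < n.\<close>

definition all_pairs :: "nat \<Rightarrow> nat set set" where
  "all_pairs n = {e. \<exists>i j. i < j \<and> j < n \<and> e = {i, j}}"

definition gnp :: "nat \<Rightarrow> real \<Rightarrow> (nat set \<Rightarrow> bool) pmf" where
  "gnp n p = Pi_pmf (all_pairs n) False (\<lambda>_. bernoulli_pmf p)"

definition adj :: "(nat set \<Rightarrow> bool) \<Rightarrow> nat \<Rightarrow> nat \<Rightarrow> bool" where
  "adj G u v \<longleftrightarrow> u \<noteq> v \<and> G {u, v}"

definition degree :: "nat \<Rightarrow> (nat set \<Rightarrow> bool) \<Rightarrow> nat \<Rightarrow> nat" where
  "degree n G v = card {w \<in> {..<n}. adj G v w}"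

definition ext_nbhd :: "nat \<Rightarrow> (nat set \<Rightarrow> bool) \<Rightarrow> nat set \<Rightarrow> nat set" where
  "ext_nbhd n G S = {w \<in> {..<n}. w \<notin> S \<and> (\<exists>u\<in>S. adj G u w)}"

definition high_deg :: "nat \<Rightarrow> real \<Rightarrow> real \<Rightarrow> (nat set \<Rightarrow> bool) \<Rightarrow> nat set" where
  "high_deg n p \<alpha> G = {v \<in> {..<n}.
      real (degree n G v) \<ge> p * real n + (1 - \<alpha>) * sqrt (2 * p * real n * ln (real n))}"

end

theory Submission
  imports Defs "HOL-Real_Asymp.Real_Asymp"
begin


lemma finite_all_pairs: "finite (all_pairs n)"
proof -
  have "all_pairs n \<subseteq> Pow {..<n}" unfolding all_pairs_def by auto
  thus ?thesis by (rule finite_subset) auto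
qed

lemma key_bound:
  fixes A F :: "nat set set" and E :: "nat \<Rightarrow> nat set set" and U :: "nat set"
    and p l m :: real
  assumes fA: "finite A" and FA: "F \<subseteq> A" and EA: "\<And>u. u \<in> U \<Longrightarrow> E u \<subseteq> A"
    and fU: "finite U" and disj: "disjoint_family_on E U"
    and EF: "\<And>u. u \<in> U \<Longrightarrow> E u \<inter> F = {}"
    and p0: "0 \<le> p" and p1: "p \<le> 1" and l0: "0 \<le> l"
  shows "measure_pmf.prob (Pi_pmf A False (\<lambda>_. bernoulli_pmf p))
           {G. (\<forall>e\<in>F. G e) \<and> (\<forall>u\<in>U. m \<le> real (card {e\<in>E u. G e}))}
         \<le> p ^ card F * (\<Prod>u\<in>U. exp (- l * m) * (1 + p * (exp l - 1)) ^ card (E u))"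
proof -
  define M where "M = Pi_pmf A False (\<lambda>_. bernoulli_pmf p)"
  define EE where "EE = (\<Union>u\<in>U. E u)"
  define h where "h e b = (if e \<in> F then (if b then 1 else 0)
       else if e \<in> EE then (if b then exp l else 1) else (1::real))" for e b
  define g where "g G = (\<Prod>e\<in>A. h e (G e))" for G
  define ev where "ev = {G. (\<forall>e\<in>F. G e) \<and> (\<forall>u\<in>U. m \<le> real (card {e\<in>E u. G e}))}"
  have fE: "finite (E u)" if "u \<in> U" for u using EA[OF that] fA finite_subset by blast
  have EEA: "EE \<subseteq> A" using EA unfolding EE_def by auto
  have fF: "finite F" using FA fA finite_subset by blast
  have fEE: "finite EE" using EEA fA finite_subset by blast
  have FEE: "F \<inter> EE = {}" using EF unfolding EE_def by auto
  have h0: "h e b \<ge> 0" for e b unfolding h_def by auto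
  have fin: "finite (set_pmf M)" unfolding M_def using fA
    by (simp add: set_Pi_pmf finite_PiE_dflt)
  have int: "integrable (measure_pmf M) f" for f :: "_ \<Rightarrow> real"
    by (rule integrable_measure_pmf_finite[OF fin])
  have Eg: "measure_pmf.expectation M g = (\<Prod>e\<in>A. (if e \<in> F then p else if e \<in> EE then 1 + p * (exp l - 1) else 1))"
    unfolding M_def g_def
    apply (subst expectation_prod_Pi_pmf[OF fA])
    subgoal by (rule integrable_measure_pmf_finite) simp
    subgoal using h0 by auto
    apply (intro prod.cong refl)
    using p0 p1 by (auto simp: h_def algebra_simps)
  have prodsplit: "(\<Prod>e\<in>A. f e) = (\<Prod>e\<in>F. f e) * (\<Prod>e\<in>EE. f e)"
    if "\<And>e. e \<in> A - (F \<union> EE) \<Longrightarrow> f e = 1" for f :: "nat set \<Rightarrow> real"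
  proof -
    have "(\<Prod>e\<in>A. f e) = (\<Prod>e\<in>F \<union> EE. f e)"
      using that FA EEA fA by (intro prod.mono_neutral_right) auto
    also have "\<dots> = (\<Prod>e\<in>F. f e) * (\<Prod>e\<in>EE. f e)"
      using fF fEE FEE by (rule prod.union_disjoint)
    finally show ?thesis .
  qed
  have prodEE: "(\<Prod>e\<in>EE. f e) = (\<Prod>u\<in>U. \<Prod>e\<in>E u. f e)" for f :: "nat set \<Rightarrow> real"
    unfolding EE_def using fU fE disj
    by (intro prod.UNION_disjoint) (auto simp: disjoint_family_on_def)
  have cardEE: "card EE = (\<Sum>u\<in>U. card (E u))"
    unfolding EE_def using fU fE disj
    by (intro card_UN_disjoint) (auto simp: disjoint_family_on_def)
  have Eg2: "measure_pmf.expectation M g = p ^ card F * (\<Prod>u\<in>U. (1 + p * (exp l - 1)) ^ card (E u))"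
  proof -
    have "measure_pmf.expectation M g = (\<Prod>e\<in>F. p) * (\<Prod>e\<in>EE. 1 + p * (exp l - 1))"
    proof -
      have "measure_pmf.expectation M g = (\<Prod>e\<in>F. (if e \<in> F then p else if e \<in> EE then 1 + p * (exp l - 1) else 1)) *
          (\<Prod>e\<in>EE. (if e \<in> F then p else if e \<in> EE then 1 + p * (exp l - 1) else 1))"
        unfolding Eg by (rule prodsplit) auto
      also have "(\<Prod>e\<in>F. (if e \<in> F then p else if e \<in> EE then 1 + p * (exp l - 1) else 1)) = (\<Prod>e\<in>F. p)"
        by (intro prod.cong) auto
      also have "(\<Prod>e\<in>EE. (if e \<in> F then p else if e \<in> EE then 1 + p * (exp l - 1) else 1)) = (\<Prod>e\<in>EE. 1 + p * (exp l - 1))"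
        using FEE by (intro prod.cong) auto
      finally show ?thesis .
    qed
    also have "\<dots> = p ^ card F * (1 + p * (exp l - 1)) ^ card EE" by simp
    also have "\<dots> = p ^ card F * (\<Prod>u\<in>U. (1 + p * (exp l - 1)) ^ card (E u))"
      by (simp add: cardEE power_sum)
    finally show ?thesis .
  qed
  have pt: "indicator ev G * (\<Prod>u\<in>U. exp (l * m)) \<le> g G" for G
  proof (cases "G \<in> ev")
    case False
    then show ?thesis using h0 unfolding g_def by (auto intro: prod_nonneg)
  next
    case True
    have "g G = (\<Prod>e\<in>F. h e (G e)) * (\<Prod>e\<in>EE. h e (G e))"
      unfolding g_def by (rule prodsplit) (auto simp: h_def)
    also have "(\<Prod>e\<in>F. h e (G e)) = 1" using True unfolding ev_def h_def by auto
    also have "(\<Prod>e\<in>EE. h e (G e)) = (\<Prod>u\<in>U. \<Prod>e\<in>E u. h e (G e))" by (rule prodEE)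
    also have "\<dots> = (\<Prod>u\<in>U. exp (l * real (card {e\<in>E u. G e})))"
    proof (intro prod.cong refl)
      fix u assume u: "u \<in> U"
      have "(\<Prod>e\<in>E u. h e (G e)) = (\<Prod>e\<in>E u. (if G e then exp l else 1))"
        using u FEE unfolding EE_def h_def by (intro prod.cong) auto
      also have "\<dots> = (\<Prod>e\<in>E u \<inter> {e. G e}. exp l) * (\<Prod>e\<in>E u \<inter> - {e. G e}. 1)"
        by (rule prod.If_cases[OF fE[OF u]])
      also have "\<dots> = exp l ^ card {e\<in>E u. G e}"
      proof -
        have "E u \<inter> {e. G e} = {e\<in>E u. G e}" by auto
        thus ?thesis by simp
      qed
      also have "\<dots> = exp (l * real (card {e\<in>E u. G e}))"
        by (metis exp_of_nat_mult mult.commute)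
      finally show "(\<Prod>e\<in>E u. h e (G e)) = exp (l * real (card {e\<in>E u. G e}))" .
    qed
    finally have geq: "g G = (\<Prod>u\<in>U. exp (l * real (card {e\<in>E u. G e})))" by simp
    have "(\<Prod>u\<in>U. exp (l * m)) \<le> (\<Prod>u\<in>U. exp (l * real (card {e\<in>E u. G e})))"
      using True l0 unfolding ev_def
      by (intro prod_mono) (auto intro!: mult_left_mono)
    thus ?thesis using True geq by simp
  qed
  have "measure_pmf.prob M ev * (\<Prod>u\<in>U. exp (l * m)) = measure_pmf.expectation M (\<lambda>G. indicator ev G * (\<Prod>u\<in>U. exp (l * m)))"
    by simp
  also have "\<dots> \<le> measure_pmf.expectation M g"
    by (intro integral_mono int pt)
  finally have le: "measure_pmf.prob M ev * (\<Prod>u\<in>U. exp (l * m)) \<le> measure_pmf.expectation M g" .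
  have pos: "(\<Prod>u\<in>U. exp (l * m)) > 0" by (intro prod_pos) auto
  have "measure_pmf.prob M ev \<le> measure_pmf.expectation M g / (\<Prod>u\<in>U. exp (l * m))"
    using le pos by (simp add: pos_le_divide_eq)
  also have "\<dots> = p ^ card F * (\<Prod>u\<in>U. exp (- l * m) * (1 + p * (exp l - 1)) ^ card (E u))"
  proof -
    have "(\<Prod>u\<in>U. exp (- l * m) * (1 + p * (exp l - 1)) ^ card (E u)) =
       (\<Prod>u\<in>U. exp (- l * m)) * (\<Prod>u\<in>U. (1 + p * (exp l - 1)) ^ card (E u))"
      by (rule prod.distrib)
    moreover have "(\<Prod>u\<in>U. exp (- l * m)) = 1 / (\<Prod>u\<in>U. exp (l * m))"
      by (simp add: exp_minus prod_dividef power_inverse divide_inverse)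
    ultimately show ?thesis unfolding Eg2 by simp
  qed
  finally show ?thesis unfolding M_def ev_def .
qed



lemma exp_cubic_bound:
  fixes x :: real assumes "0 \<le> x" "x \<le> 1"
  shows "exp x \<le> 1 + x + x^2/2 + x^3"
proof -
  obtain t where t: "\<bar>t\<bar> \<le> \<bar>x\<bar>" "exp x = (\<Sum>m<3. (x ^ m) / fact m) + (exp t / fact 3) * x ^ 3"
    using Maclaurin_exp_le[of x 3] by blast
  have "exp t \<le> exp 1" using t(1) assms by simp
  also have "exp 1 \<le> (3::real)" using exp_le by simp
  finally have et: "exp t \<le> 3" .
  have x3: "0 \<le> x^3" using assms by simp
  have "(exp t / fact 3) * x ^ 3 \<le> (3 / 6) * x^3"
    using et x3 by (intro mult_right_mono) (auto simp: fact_numeral)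
  moreover have "(\<Sum>m<3. (x ^ m) / fact m) = 1 + x + x^2/2"
    by (simp add: numeral_3_eq_3 fact_numeral power2_eq_square)
  ultimately show ?thesis using t(2) x3 by linarith
qed

lemma tail_bound:
  fixes n N :: nat and C p \<alpha> k :: real
  assumes n2: "n \<ge> 2" and C: "C \<ge> 20000" and plow: "C * ln (real n) / real n \<le> p"
    and p1: "p \<le> 1" and a0: "0 < \<alpha>" and a1: "\<alpha> \<le> 1/100" and k0: "0 \<le> k" and k1: "k \<le> 11"
    and Nn: "N \<le> n"
  shows "exp (- ((1-\<alpha>) * sqrt (2*p*real n*ln (real n)) / (p * real n)) *
               (p * real n + (1 - \<alpha>) * sqrt (2 * p * real n * ln (real n)) - k)) *
         (1 + p * (exp ((1-\<alpha>) * sqrt (2*p*real n*ln (real n)) / (p * real n)) - 1)) ^ N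
         \<le> 2 * real n powr (-24/25)"
proof -
  define L where "L = ln (real n)"
  define \<mu> where "\<mu> = p * real n"
  define s where "s = sqrt (2 * p * real n * ln (real n))"
  define x where "x = (1-\<alpha>) * s / \<mu>"
  have L0: "L > 0" unfolding L_def using n2 by simp
  have n0: "real n > 0" using n2 by simp
  have muCL: "\<mu> \<ge> C * L" unfolding \<mu>_def L_def using plow n0 by (simp add: pos_divide_le_eq mult.commute)
  have "C * L > 0" using C L0 by simp
  hence mu0: "\<mu> > 0" using muCL by linarith
  have p0: "p > 0" using mu0 n0 unfolding \<mu>_def by (simp add: zero_less_mult_iff)
  have nn: "0 \<le> 2 * p * real n * ln (real n)"
    using mu0 L0 unfolding \<mu>_def L_def
    by (metis (no_types, opaque_lifting) less_eq_real_def mult.assoc mult_nonneg_nonneg zero_le_numeral)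
  have s2': "s^2 = 2 * p * real n * ln (real n)" unfolding s_def by (rule real_sqrt_pow2[OF nn])
  have s2: "s^2 = 2 * \<mu> * L" unfolding s2' \<mu>_def L_def by (simp add: mult.assoc)
  have s0: "s \<ge> 0" unfolding s_def by (rule real_sqrt_ge_zero[OF nn])
  have x0: "x \<ge> 0" unfolding x_def using a1 s0 mu0 by simp
  have xmu: "x * (1-\<alpha>) * s = \<mu> * x^2"
    unfolding x_def using mu0 by (simp add: power2_eq_square field_simps)
  have mux2: "\<mu> * x^2 = 2 * (1-\<alpha>)^2 * L"
    unfolding x_def using mu0 s2 by (simp add: power_divide power_mult_distrib field_simps power2_eq_square)
  have x2: "x^2 \<le> 1/10000"
  proof -
    have "x^2 = 2 * (1-\<alpha>)^2 * L / \<mu>" using mux2 mu0 by (simp add: field_simps)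
    also have "\<dots> \<le> 2 * L / \<mu>"
    proof -
      have "(1-\<alpha>)^2 \<le> 1" using a0 a1 by (simp add: power_le_one)
      thus ?thesis using L0 mu0 by (simp add: divide_right_mono)
    qed
    also have "\<dots> \<le> 2 * L / (C * L)" using muCL L0 C mu0 by (intro divide_left_mono) auto
    also have "\<dots> = 2 / C" using L0 by simp
    also have "\<dots> \<le> 1/10000" using C by (simp add: field_simps)
    finally show ?thesis .
  qed
  have x1: "x \<le> 1/100"
  proof (rule ccontr)
    assume "\<not> x \<le> 1/100"
    hence "x^2 > (1/100)^2" by (intro power_strict_mono) auto
    thus False using x2 by (simp add: power_divide)
  qed
  have ex: "exp x \<le> 1 + x + x^2/2 + x^3" using exp_cubic_bound x0 x1 by simp
  have base0: "0 \<le> 1 + p * (exp x - 1)" using p0 x0 by simp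
  have "(1 + p * (exp x - 1)) ^ N \<le> exp (p * (exp x - 1)) ^ N"
    using base0 by (intro power_mono) (simp add: exp_ge_add_one_self add.commute, simp)
  also have "\<dots> = exp (real N * (p * (exp x - 1)))" by (simp add: exp_of_nat_mult)
  also have "\<dots> \<le> exp (\<mu> * (exp x - 1))"
    unfolding \<mu>_def using Nn p0 x0 by (simp add: mult_right_mono)
  finally have pw: "(1 + p * (exp x - 1)) ^ N \<le> exp (\<mu> * (exp x - 1))" .
  have lm0: "x * (\<mu> + (1-\<alpha>) * s - k) = \<mu> * x + x * (1-\<alpha>) * s - x * k"
    by (simp add: right_diff_distrib distrib_left mult.assoc mult.commute)
  have lm: "x * (\<mu> + (1-\<alpha>) * s - k) = \<mu> * x + \<mu> * x^2 - x * k"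
    using lm0 xmu by simp
  have e1: "\<mu> * (exp x - 1) \<le> \<mu> * x + \<mu> * x^2 / 2 + \<mu> * x^3"
  proof -
    have "\<mu> * (exp x - 1) \<le> \<mu> * (x + x^2/2 + x^3)"
      using ex mu0 by (intro mult_left_mono) auto
    thus ?thesis by (simp add: distrib_left)
  qed
  have x3: "\<mu> * x^3 \<le> \<mu> * x^2 / 100"
  proof -
    have "x^3 = x * x^2" by (simp add: power_def)
    also have "\<dots> \<le> 1/100 * x^2" using x1 by (intro mult_right_mono) auto
    finally have "x^3 \<le> x^2 / 100" by simp
    hence "\<mu> * x^3 \<le> \<mu> * (x^2 / 100)" using mu0 by (intro mult_left_mono) auto
    thus ?thesis by simp
  qed
  have al: "(1-\<alpha>)^2 \<ge> (99/100)^2" using a0 a1 by (intro power_mono) auto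
  have xk: "x * k \<le> 1/100 * 11" by (rule mult_mono[OF x1 k1]) (use k0 in auto)
  have expo: "- x * (\<mu> + (1-\<alpha>) * s - k) + \<mu> * (exp x - 1) \<le> -(24/25) * L + 11/100"
  proof -
    have "- x * (\<mu> + (1-\<alpha>) * s - k) + \<mu> * (exp x - 1) \<le> - (\<mu> * x^2) * (49/100) + x * k"
    proof -
      have "- x * (\<mu> + (1-\<alpha>) * s - k) = - (x * (\<mu> + (1-\<alpha>) * s - k))" by simp
      thus ?thesis using lm e1 x3 by linarith
    qed
    also have "\<dots> \<le> - (2 * (99/100)^2 * L) * (49/100) + 11/100"
    proof -
      have "2 * (99/100)^2 * L \<le> 2 * (1-\<alpha>)^2 * L" using al L0 by (intro mult_right_mono) auto
      hence "2 * (99/100)^2 * L \<le> \<mu> * x^2" using mux2 by simp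
      thus ?thesis using xk by linarith
    qed
    also have "\<dots> \<le> -(24/25) * L + 11/100" using L0 by (simp add: power2_eq_square)
    finally show ?thesis .
  qed
  have "exp (- x * (\<mu> + (1-\<alpha>) * s - k)) * (1 + p * (exp x - 1)) ^ N
        \<le> exp (- x * (\<mu> + (1-\<alpha>) * s - k)) * exp (\<mu> * (exp x - 1))"
    using pw by simp
  also have "\<dots> = exp (- x * (\<mu> + (1-\<alpha>) * s - k) + \<mu> * (exp x - 1))" by (rule exp_add[symmetric])
  also have "\<dots> \<le> exp (-(24/25) * L + 11/100)" using expo by simp
  also have "\<dots> = exp (11/100) * real n powr (-24/25)"
  proof -
    have "exp (-(24/25) * L + 11/100) = exp (11/100) * exp (-(24/25) * L)"
      by (simp add: exp_add[symmetric] add.commute)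
    also have "exp (-(24/25) * L) = real n powr (-24/25)"
      unfolding L_def using n0 by (simp add: powr_def mult.commute)
    finally show ?thesis .
  qed
  also have "\<dots> \<le> 2 * real n powr (-24/25)"
  proof -
    have "exp (11/100::real) \<le> 1 + 11/100 + (11/100)^2/2 + (11/100)^3"
      by (rule exp_cubic_bound) auto
    hence "exp (11/100::real) \<le> 2" by (simp add: power2_eq_square power3_eq_cube)
    thus ?thesis by (intro mult_right_mono) auto
  qed
  finally show ?thesis unfolding x_def s_def \<mu>_def by simp
qed



lemma pattern_bound:
  fixes xs :: "nat list" and Ep :: "(nat \<times> nat) set" and Up :: "nat set"
    and n :: nat and C p \<alpha> :: real
  assumes dist: "distinct xs" and xsn: "set xs \<subseteq> {..<n}" and k11: "length xs \<le> 11"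
    and Ep: "Ep \<subseteq> {(a,b). a < b \<and> b < length xs}" and Up: "Up \<subseteq> {..<length xs}"
    and n2: "n \<ge> 2" and C: "C \<ge> 20000" and plow: "C * ln (real n) / real n \<le> p"
    and p1: "p \<le> 1" and a0: "0 < \<alpha>" and a1: "\<alpha> \<le> 1/100"
  shows "measure_pmf.prob (gnp n p)
     {G. (\<forall>(a,b)\<in>Ep. G {xs!a, xs!b}) \<and> (\<forall>j\<in>Up. xs!j \<in> high_deg n p \<alpha> G)}
     \<le> p ^ card Ep * (2 * real n powr (-24/25)) ^ card Up"
proof -
  define k where "k = length xs"
  define S where "S = set xs"
  define U where "U = (\<lambda>j. xs!j) ` Up"
  define F where "F = (\<lambda>(a,b). {xs!a, xs!b}) ` Ep"
  define E where "E u = (\<lambda>x. {u,x}) ` ({..<n} - S)" for u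
  define l where "l = (1-\<alpha>) * sqrt (2*p*real n*ln (real n)) / (p * real n)"
  define m where "m = p * real n + (1 - \<alpha>) * sqrt (2 * p * real n * ln (real n)) - real k"
  have n0: "real n > 0" using n2 by simp
  have L0: "ln (real n) > 0" using n2 by simp
  have p0: "p > 0"
  proof -
    have "C * ln (real n) / real n > 0" using C L0 n0 by simp
    thus ?thesis using plow by linarith
  qed
  have cardS: "card S = k" unfolding S_def k_def using dist by (simp add: distinct_card)
  have l0: "l \<ge> 0" unfolding l_def using p0 n0 a1 by simp
  have fA: "finite (all_pairs n)" by (rule finite_all_pairs)
  have pair_in: "{a, b} \<in> all_pairs n" if "a < n" "b < n" "a \<noteq> b" for a b
  proof (cases "a < b")
    case True thus ?thesis using that unfolding all_pairs_def by blast
  next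
    case False
    hence "b < a" using that by simp
    thus ?thesis using that unfolding all_pairs_def by (auto simp: insert_commute)
  qed
  have FA: "F \<subseteq> all_pairs n"
  proof
    fix e assume "e \<in> F"
    then obtain a b where ab: "(a,b) \<in> Ep" "e = {xs!a, xs!b}" unfolding F_def by auto
    hence "a < k" "b < k" "a \<noteq> b" using Ep unfolding k_def by auto
    hence "xs!a < n" "xs!b < n" "xs!a \<noteq> xs!b" using xsn dist unfolding k_def
      by (auto simp: nth_eq_iff_index_eq dest!: nth_mem)
    thus "e \<in> all_pairs n" using ab pair_in by simp
  qed
  have EA: "E u \<subseteq> all_pairs n" if "u \<in> U" for u
  proof -
    have "u \<in> S" using that Up unfolding U_def S_def k_def by auto
    hence "u < n" using xsn unfolding S_def by auto
    thus ?thesis unfolding E_def using pair_in \<open>u \<in> S\<close> by auto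
  qed
  have fU: "finite U" unfolding U_def using Up finite_subset by auto
  have disj: "disjoint_family_on E U"
    unfolding disjoint_family_on_def
  proof (intro ballI impI)
    fix u v assume uv: "u \<in> U" "v \<in> U" "u \<noteq> v"
    hence "u \<in> S" "v \<in> S" using Up unfolding U_def S_def by auto
    thus "E u \<inter> E v = {}" unfolding E_def using uv by (auto simp: doubleton_eq_iff)
  qed
  have EF: "E u \<inter> F = {}" if "u \<in> U" for u
  proof -
    have "F \<subseteq> Pow S" unfolding F_def S_def using Ep by auto
    moreover have "\<forall>e\<in>E u. \<not> e \<subseteq> S" unfolding E_def by auto
    ultimately show ?thesis by auto
  qed
  have injF: "inj_on (\<lambda>(a,b). {xs!a, xs!b}) Ep"
  proof (rule inj_onI, clarify)
    fix a b a' b' assume h: "(a,b) \<in> Ep" "(a',b') \<in> Ep" "{xs!a, xs!b} = {xs!a', xs!b'}"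
    have lt: "a < b" "b < k" "a' < b'" "b' < k" using h Ep unfolding k_def by auto
    have eq: "xs!i = xs!j \<longleftrightarrow> i = j" if "i < k" "j < k" for i j
      using that dist unfolding k_def by (simp add: nth_eq_iff_index_eq)
    show "a = a' \<and> b = b'"
      using h(3) lt eq[of a a'] eq[of a b'] eq[of b a'] eq[of b b']
      by (auto simp: doubleton_eq_iff)
  qed
  have cardF: "card F = card Ep" unfolding F_def by (rule card_image[OF injF])
  have cardU: "card U = card Up" unfolding U_def
    using Up dist by (intro card_image inj_onI) (use nth_eq_iff_index_eq in blast)
  have cardE: "card (E u) \<le> n" if "u \<in> U" for u
  proof -
    have "card (E u) \<le> card ({..<n} - S)" unfolding E_def by (rule card_image_le) auto
    also have "\<dots> \<le> n" using card_mono[of "{..<n}" "{..<n} - S"] by auto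
    finally show ?thesis .
    qed
  have sub: "{G. (\<forall>(a,b)\<in>Ep. G {xs!a, xs!b}) \<and> (\<forall>j\<in>Up. xs!j \<in> high_deg n p \<alpha> G)}
     \<subseteq> {G. (\<forall>e\<in>F. G e) \<and> (\<forall>u\<in>U. m \<le> real (card {e\<in>E u. G e}))}"
  proof (clarify, intro conjI ballI)
    fix G assume h: "\<forall>(a,b)\<in>Ep. G {xs!a, xs!b}" "\<forall>j\<in>Up. xs!j \<in> high_deg n p \<alpha> G"
    fix e assume "e \<in> F" thus "G e" using h(1) unfolding F_def by auto
  next
    fix G assume h: "\<forall>(a,b)\<in>Ep. G {xs!a, xs!b}" "\<forall>j\<in>Up. xs!j \<in> high_deg n p \<alpha> G"
    fix u assume u: "u \<in> U"
    have uS: "u \<in> S" using u Up unfolding U_def S_def by auto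
    have hd: "u \<in> high_deg n p \<alpha> G" using u h(2) unfolding U_def by auto
    define X where "X = {x \<in> {..<n} - S. G {u,x}}"
    have "{e\<in>E u. G e} = (\<lambda>x. {u,x}) ` X" unfolding E_def X_def by auto
    moreover have "inj_on (\<lambda>x. {u,x}) X" unfolding X_def using uS
      by (intro inj_onI) (auto simp: doubleton_eq_iff)
    ultimately have cX: "card {e\<in>E u. G e} = card X" by (simp add: card_image)
    have "{w \<in> {..<n}. adj G u w} \<subseteq> X \<union> S" unfolding X_def adj_def by auto
    hence "degree n G u \<le> card (X \<union> S)" unfolding degree_def
      by (intro card_mono) (auto simp: S_def X_def)
    also have "\<dots> \<le> card X + card S" by (rule card_Un_le)
    finally have "real (degree n G u) \<le> real (card X) + real k" using cardS by simp
    moreover have "real (degree n G u) \<ge> p * real n + (1 - \<alpha>) * sqrt (2 * p * real n * ln (real n))"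
      using hd unfolding high_deg_def by auto
    ultimately show "m \<le> real (card {e\<in>E u. G e})" unfolding m_def cX by linarith
  qed
  have "measure_pmf.prob (gnp n p)
     {G. (\<forall>(a,b)\<in>Ep. G {xs!a, xs!b}) \<and> (\<forall>j\<in>Up. xs!j \<in> high_deg n p \<alpha> G)}
     \<le> measure_pmf.prob (gnp n p) {G. (\<forall>e\<in>F. G e) \<and> (\<forall>u\<in>U. m \<le> real (card {e\<in>E u. G e}))}"
    by (rule measure_pmf.finite_measure_mono[OF sub]) simp
  also have "\<dots> \<le> p ^ card F * (\<Prod>u\<in>U. exp (- l * m) * (1 + p * (exp l - 1)) ^ card (E u))"
    unfolding gnp_def
    by (rule key_bound[OF fA FA EA fU disj EF]) (use p0 p1 l0 in auto)
  also have "\<dots> \<le> p ^ card F * (\<Prod>u\<in>U. 2 * real n powr (-24/25))"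
  proof (intro mult_left_mono prod_mono conjI)
    fix u assume u: "u \<in> U"
    show "0 \<le> exp (- l * m) * (1 + p * (exp l - 1)) ^ card (E u)"
      using p0 l0 by (intro mult_nonneg_nonneg zero_le_power) auto
    show "exp (- l * m) * (1 + p * (exp l - 1)) ^ card (E u) \<le> 2 * real n powr (-24/25)"
      unfolding l_def m_def
      by (rule tail_bound[OF n2 C plow p1 a0 a1]) (use k11 cardE[OF u] in \<open>auto simp: k_def\<close>)
  qed (use p0 in auto)
  also have "\<dots> = p ^ card Ep * (2 * real n powr (-24/25)) ^ card Up"
    by (simp add: cardF cardU)
  finally show ?thesis .
qed



definition "Ep3 = (\<lambda>i. (0::nat, i+2)) ` {..<7} \<union> (\<lambda>i. (1::nat, i+2)) ` {..<(7::nat)}"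
definition "Ep4 = (\<lambda>i. (0::nat, i+1)) ` {..<5} \<union> (\<lambda>i. (i+1, i+6)) ` {..<(5::nat)}"
definition "Up4 = (\<lambda>i. i+6) ` {..<(5::nat)}"
definition "Ep2 = {(0::nat,1::nat),(0,2)}"
definition "Up2 = {1::nat,2}"

lemma list_of_card:
  fixes X :: "nat set"
  assumes "finite X" "card X \<ge> k"
  shows "\<exists>xs. distinct xs \<and> length xs = k \<and> set xs \<subseteq> X"
proof -
  define ys where "ys = sorted_list_of_set X"
  have "distinct ys" "length ys = card X" "set ys = X" using assms unfolding ys_def by auto
  thus ?thesis using assms
    by (intro exI[of _ "take k ys"]) (auto dest: in_set_takeD)
qed

lemma codeg_bound:
  assumes no3: "\<not>(\<exists>xs. distinct xs \<and> set xs \<subseteq> {..<n} \<and> length xs = 9 \<and> (\<forall>(a,b)\<in>Ep3. G {xs!a, xs!b}))"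
    and v: "v < n" and u: "u < n" and vu: "v \<noteq> u"
  shows "card {x\<in>{..<n}. adj G v x \<and> adj G u x} \<le> 6"
proof (rule ccontr)
  define X where "X = {x\<in>{..<n}. adj G v x \<and> adj G u x}"
  assume "\<not> card {x\<in>{..<n}. adj G v x \<and> adj G u x} \<le> 6"
  hence "card X \<ge> 7" unfolding X_def by simp
  then obtain cs where cs: "distinct cs" "length cs = 7" "set cs \<subseteq> X"
    using list_of_card[of X 7] unfolding X_def by auto
  define xs where "xs = v # u # cs"
  have "v \<notin> X" "u \<notin> X" unfolding X_def adj_def by auto
  hence d: "distinct xs" unfolding xs_def using cs vu by auto
  have s: "set xs \<subseteq> {..<n}" unfolding xs_def using cs v u unfolding X_def by auto
  have l: "length xs = 9" unfolding xs_def using cs by simp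
  have "(\<forall>(a,b)\<in>Ep3. G {xs!a, xs!b})"
  proof -
    have "adj G v (cs!i) \<and> adj G u (cs!i)" if "i < 7" for i
    proof -
      have "cs!i \<in> X" using cs that nth_mem[of i cs] by auto
      thus ?thesis unfolding X_def by blast
    qed
    thus ?thesis unfolding Ep3_def xs_def adj_def by auto
  qed
  thus False using no3 d s l by blast
qed

lemma main_det:
  fixes B :: "nat set"
  assumes no2: "\<not>(\<exists>xs. distinct xs \<and> set xs \<subseteq> {..<n} \<and> length xs = 3 \<and> (\<forall>(a,b)\<in>Ep2. G {xs!a, xs!b}) \<and> (\<forall>j\<in>Up2. xs!j \<in> B))"
    and no3: "\<not>(\<exists>xs. distinct xs \<and> set xs \<subseteq> {..<n} \<and> length xs = 9 \<and> (\<forall>(a,b)\<in>Ep3. G {xs!a, xs!b}))"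
    and no4: "\<not>(\<exists>xs. distinct xs \<and> set xs \<subseteq> {..<n} \<and> length xs = 11 \<and> (\<forall>(a,b)\<in>Ep4. G {xs!a, xs!b}) \<and> (\<forall>j\<in>Up4. xs!j \<in> B))"
    and v: "v < n" and Bn: "B \<subseteq> {..<n}"
  shows "card {w\<in>{..<n}. adj G v w \<and> w \<in> B \<union> ext_nbhd n G (B - {v})} \<le> 100"
proof -
  define W where "W = {w\<in>{..<n}. adj G v w \<and> w \<in> B \<union> ext_nbhd n G (B - {v})}"
  define W1 where "W1 = W \<inter> B"
  define W2 where "W2 = W - B"
  have fW: "finite W" unfolding W_def by auto
  have c1: "card W1 \<le> 1"
  proof (rule ccontr)
    assume "\<not> card W1 \<le> 1"
    hence "card W1 \<ge> 2" by simp
    then obtain ws where ws: "distinct ws" "length ws = 2" "set ws \<subseteq> W1"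
      using list_of_card[of W1 2] fW unfolding W1_def by auto
    define xs where "xs = v # ws"
    have w: "ws!0 \<in> W1" "ws!1 \<in> W1" using ws nth_mem[of 0 ws] nth_mem[of 1 ws] by auto
    hence "v \<notin> set ws" using ws unfolding W1_def W_def adj_def by auto
    hence d: "distinct xs" unfolding xs_def using ws by auto
    have s: "set xs \<subseteq> {..<n}" unfolding xs_def using ws v unfolding W1_def W_def by auto
    have l: "length xs = 3" unfolding xs_def using ws by simp
    have "(\<forall>(a,b)\<in>Ep2. G {xs!a, xs!b}) \<and> (\<forall>j\<in>Up2. xs!j \<in> B)"
      using w unfolding Ep2_def Up2_def xs_def W1_def W_def adj_def by auto
    thus False using no2 d s l by blast
  qed
  have W2N: "\<exists>u. u \<in> B \<and> u \<noteq> v \<and> adj G u w" if "w \<in> W2" for w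
    using that unfolding W2_def W_def ext_nbhd_def by auto
  define f where "f w = (SOME u. u \<in> B \<and> u \<noteq> v \<and> adj G u w)" for w
  have f: "f w \<in> B \<and> f w \<noteq> v \<and> adj G (f w) w" if "w \<in> W2" for w
    unfolding f_def using someI_ex[OF W2N[OF that]] .
  have fW2: "finite W2" using fW unfolding W2_def by auto
  have c2: "card (f ` W2) \<le> 4"
  proof (rule ccontr)
    assume "\<not> card (f ` W2) \<le> 4"
    hence "card (f ` W2) \<ge> 5" by simp
    then obtain us where us: "distinct us" "length us = 5" "set us \<subseteq> f ` W2"
      using list_of_card[of "f ` W2" 5] fW2 by auto
    define ws where "ws = map (inv_into W2 f) us"
    have wsi: "ws!i \<in> W2 \<and> f (ws!i) = us!i" if "i < 5" for i
    proof -
      have "us!i \<in> f ` W2" using us that nth_mem[of i us] by auto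
      thus ?thesis unfolding ws_def using that us by (auto simp: inv_into_into f_inv_into_f)
    qed
    have dws: "distinct ws" unfolding ws_def using us
      by (simp add: distinct_map inj_on_inv_into)
    have lws: "length ws = 5" unfolding ws_def using us by simp
    have setws: "set ws \<subseteq> W2" using wsi lws by (auto simp: in_set_conv_nth)
    have setus: "set us \<subseteq> B" using us f by auto
    define xs where "xs = v # ws @ us"
    have "v \<notin> set ws" using setws unfolding W2_def W_def adj_def by auto
    moreover have "v \<notin> set us" using us f by auto
    moreover have "set ws \<inter> set us = {}" using setws setus unfolding W2_def by auto
    ultimately have d: "distinct xs" unfolding xs_def using dws us by auto
    have s: "set xs \<subseteq> {..<n}" unfolding xs_def using v setws setus Bn unfolding W2_def W_def by auto
    have l: "length xs = 11" unfolding xs_def using lws us by simp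
    have ix1: "xs!(i+1) = ws!i" if "i < 5" for i unfolding xs_def using that lws by (simp add: nth_append)
    have ix6: "xs!(i+6) = us!i" if "i < 5" for i
    proof -
      have "xs!(i+6) = (ws @ us)!(5+i)" unfolding xs_def by simp
      thus ?thesis using lws by (simp add: nth_append add.commute)
    qed
    have "(\<forall>(a,b)\<in>Ep4. G {xs!a, xs!b}) \<and> (\<forall>j\<in>Up4. xs!j \<in> B)"
    proof -
      have "G {v, ws!i} \<and> G {ws!i, us!i} \<and> us!i \<in> B" if "i < 5" for i
      proof -
        have "ws!i \<in> W" using wsi[OF that] unfolding W2_def by auto
        hence a: "G {v, ws!i}" unfolding W_def adj_def by auto
        have "adj G (us!i) (ws!i)" "us!i \<in> B" using f[of "ws!i"] wsi[OF that] by auto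
        thus ?thesis using a unfolding adj_def by (auto simp: insert_commute)
      qed
      moreover have "xs!0 = v" unfolding xs_def by simp
      ultimately show ?thesis unfolding Ep4_def Up4_def using ix1 ix6 by auto
    qed
    thus False using no4 d s l by blast
  qed
  have fib: "card {w\<in>W2. f w = u} \<le> 6" if uf: "u \<in> f ` W2" for u
  proof -
    obtain w0 where w0: "w0 \<in> W2" "u = f w0" using uf by blast
    have "f w0 \<in> B \<and> f w0 \<noteq> v" using f[OF w0(1)] by blast
    hence uB: "u \<noteq> v" "u < n" using Bn w0(2) by auto
    have "{w\<in>W2. f w = u} \<subseteq> {x\<in>{..<n}. adj G v x \<and> adj G u x}"
    proof
      fix w assume w: "w \<in> {w\<in>W2. f w = u}"
      hence "adj G u w" using f[of w] by blast
      moreover have "w < n \<and> adj G v w" using w unfolding W2_def W_def by blast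
      ultimately show "w \<in> {x\<in>{..<n}. adj G v x \<and> adj G u x}" by blast
    qed
    hence "card {w\<in>W2. f w = u} \<le> card {x\<in>{..<n}. adj G v x \<and> adj G u x}"
      by (intro card_mono) auto
    also have "\<dots> \<le> 6" using codeg_bound[OF no3 v uB(2)] uB(1) by simp
    finally show ?thesis .
  qed
  have eqW2: "W2 = (\<Union>u\<in>f ` W2. {w\<in>W2. f w = u})" by blast
  have "card (\<Union>u\<in>f ` W2. {w\<in>W2. f w = u}) \<le> (\<Sum>u\<in>f ` W2. card {w\<in>W2. f w = u})"
    by (rule card_UN_le) (use fW2 in simp)
  hence "card W2 \<le> (\<Sum>u\<in>f ` W2. card {w\<in>W2. f w = u})" using eqW2 by simp
  also have "\<dots> \<le> (\<Sum>u\<in>f ` W2. 6)" by (intro sum_mono fib)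
  also have "\<dots> = 6 * card (f ` W2)" by simp
  also have "\<dots> \<le> 24" using c2 by simp
  finally have cW2: "card W2 \<le> 24" .
  have "W = W1 \<union> W2" unfolding W1_def W2_def by blast
  hence "card W \<le> card W1 + card W2" using card_Un_le[of W1 W2] by simp
  thus ?thesis using c1 cW2 unfolding W_def by simp
qed



lemma union_pattern:
  fixes Ep :: "(nat \<times> nat) set" and Up :: "nat set" and n k :: nat and C p \<alpha> :: real
  assumes k11: "k \<le> 11"
    and Ep: "Ep \<subseteq> {(a,b). a < b \<and> b < k}" and Up: "Up \<subseteq> {..<k}"
    and n2: "n \<ge> 2" and C: "C \<ge> 20000" and plow: "C * ln (real n) / real n \<le> p"
    and p1: "p \<le> 1" and a0: "0 < \<alpha>" and a1: "\<alpha> \<le> 1/100"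
  shows "measure_pmf.prob (gnp n p)
     {G. \<exists>xs. distinct xs \<and> set xs \<subseteq> {..<n} \<and> length xs = k \<and>
        (\<forall>(a,b)\<in>Ep. G {xs!a, xs!b}) \<and> (\<forall>j\<in>Up. xs!j \<in> high_deg n p \<alpha> G)}
     \<le> real n ^ k * (p ^ card Ep * (2 * real n powr (-24/25)) ^ card Up)"
proof -
  define T where "T = {xs. set xs \<subseteq> {..<n} \<and> length xs = k \<and> distinct xs}"
  define ev where "ev xs = {G. (\<forall>(a,b)\<in>Ep. G {xs!a, xs!b}) \<and> (\<forall>j\<in>Up. xs!j \<in> high_deg n p \<alpha> G)}" for xs
  have T1: "T \<subseteq> {xs. set xs \<subseteq> {..<n} \<and> length xs = k}" unfolding T_def by auto
  have fT: "finite T" using T1 finite_subset finite_lists_length_eq[of "{..<n}" k] by auto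
  have cT: "card T \<le> n ^ k"
    using card_mono[OF finite_lists_length_eq[of "{..<n}" k] T1] card_lists_length_eq[of "{..<n}" k] by simp
  have eq: "{G. \<exists>xs. distinct xs \<and> set xs \<subseteq> {..<n} \<and> length xs = k \<and>
        (\<forall>(a,b)\<in>Ep. G {xs!a, xs!b}) \<and> (\<forall>j\<in>Up. xs!j \<in> high_deg n p \<alpha> G)} = (\<Union>xs\<in>T. ev xs)"
    unfolding T_def ev_def by blast
  have "measure_pmf.prob (gnp n p) (\<Union>xs\<in>T. ev xs) \<le> (\<Sum>xs\<in>T. measure_pmf.prob (gnp n p) (ev xs))"
    by (rule measure_pmf.finite_measure_subadditive_finite[OF fT]) auto
  also have "\<dots> \<le> (\<Sum>xs\<in>T. p ^ card Ep * (2 * real n powr (-24/25)) ^ card Up)"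
  proof (rule sum_mono)
    fix xs assume xs: "xs \<in> T"
    show "measure_pmf.prob (gnp n p) (ev xs) \<le> p ^ card Ep * (2 * real n powr (-24/25)) ^ card Up"
      unfolding ev_def
      by (rule pattern_bound[OF _ _ _ _ _ n2 C plow p1 a0 a1]) (use xs Ep Up k11 in \<open>auto simp: T_def\<close>)
  qed
  also have "\<dots> = real (card T) * (p ^ card Ep * (2 * real n powr (-24/25)) ^ card Up)" by simp
  also have "\<dots> \<le> real n ^ k * (p ^ card Ep * (2 * real n powr (-24/25)) ^ card Up)"
  proof (rule mult_right_mono)
    show "real (card T) \<le> real n ^ k" using cT by (metis of_nat_le_iff of_nat_power)
    have "p \<ge> 0"
    proof -
      have "C * ln (real n) / real n \<ge> 0" using C n2 by simp
      thus ?thesis using plow by linarith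
    qed
    thus "0 \<le> p ^ card Ep * (2 * real n powr (-24/25)) ^ card Up" by simp
  qed
  finally show ?thesis unfolding eq .
qed

lemma markov_B:
  fixes n :: nat and C p \<alpha> :: real
  assumes n2: "n \<ge> 2" and C: "C \<ge> 20000" and plow: "C * ln (real n) / real n \<le> p"
    and p1: "p \<le> 1" and a0: "0 < \<alpha>" and a1: "\<alpha> \<le> 1/100"
  shows "measure_pmf.prob (gnp n p) {G. \<not> real (card (high_deg n p \<alpha> G)) \<le> real n powr (1/10)}
     \<le> real n * (2 * real n powr (-24/25)) / real n powr (1/10)"
proof -
  define M where "M = gnp n p"
  define c where "c = real n powr (1/10)"
  have c0: "c > 0" unfolding c_def using n2 by simp
  have fin: "finite (set_pmf M)" unfolding M_def gnp_def using finite_all_pairs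
    by (simp add: set_Pi_pmf finite_PiE_dflt)
  have int: "integrable (measure_pmf M) f" for f :: "_ \<Rightarrow> real"
    by (rule integrable_measure_pmf_finite[OF fin])
  have cardsum: "real (card (high_deg n p \<alpha> G)) = (\<Sum>v<n. indicator {G. v \<in> high_deg n p \<alpha> G} G)" for G
  proof -
    have "high_deg n p \<alpha> G \<subseteq> {..<n}" unfolding high_deg_def by auto
    hence "card (high_deg n p \<alpha> G) = card ({..<n} \<inter> high_deg n p \<alpha> G)" by (simp add: Int_absorb1)
    also have "real \<dots> = (\<Sum>v<n. indicator (high_deg n p \<alpha> G) v)"
      by (simp add: indicator_def sum.If_cases)
    also have "\<dots> = (\<Sum>v<n. indicator {G. v \<in> high_deg n p \<alpha> G} G)"
      by (intro sum.cong refl) (simp add: indicator_def)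
    finally show ?thesis .
  qed
  have pv: "measure_pmf.prob M {G. v \<in> high_deg n p \<alpha> G} \<le> 2 * real n powr (-24/25)" if v: "v < n" for v
  proof -
    have "measure_pmf.prob M {G. (\<forall>(a,b)\<in>{}. G {[v]!a, [v]!b}) \<and> (\<forall>j\<in>{0}. [v]!j \<in> high_deg n p \<alpha> G)}
          \<le> p ^ card ({}::(nat\<times>nat) set) * (2 * real n powr (-24/25)) ^ card {0::nat}"
      unfolding M_def by (rule pattern_bound[OF _ _ _ _ _ n2 C plow p1 a0 a1]) (use v in auto)
    thus ?thesis by simp
  qed
  have "measure_pmf.prob M {G. \<not> real (card (high_deg n p \<alpha> G)) \<le> c}
      \<le> measure_pmf.prob M {G \<in> space (measure_pmf M). real (card (high_deg n p \<alpha> G)) \<ge> c}"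
    by (rule measure_pmf.finite_measure_mono) auto
  also have "\<dots> \<le> measure_pmf.expectation M (\<lambda>G. real (card (high_deg n p \<alpha> G))) / c"
    by (rule integral_Markov_inequality_measure[OF int _ _ c0]) auto
  also have "measure_pmf.expectation M (\<lambda>G. real (card (high_deg n p \<alpha> G)))
       = (\<Sum>v<n. measure_pmf.prob M {G. v \<in> high_deg n p \<alpha> G})"
    unfolding cardsum by (subst Bochner_Integration.integral_sum) (auto intro: int)
  also have "\<dots> \<le> (\<Sum>v<n. 2 * real n powr (-24/25))" by (intro sum_mono pv) auto
  also have "\<dots> = real n * (2 * real n powr (-24/25))" by simp
  finally show ?thesis unfolding M_def c_def by (simp add: divide_right_mono)
qed



lemma card_Ep2: "card Ep2 = 2" by (simp add: Ep2_def)
lemma card_Up2: "card Up2 = 2" by (simp add: Up2_def)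
lemma card_Ep3: "card Ep3 = 14"
  unfolding Ep3_def by (subst card_Un_disjoint) (auto simp: card_image inj_on_def)
lemma card_Ep4: "card Ep4 = 10"
  unfolding Ep4_def by (subst card_Un_disjoint) (auto simp: card_image inj_on_def)
lemma card_Up4: "card Up4 = 5"
  unfolding Up4_def by (auto simp: card_image inj_on_def)
lemma sub_Ep2: "Ep2 \<subseteq> {(a,b). a < b \<and> b < 3}" by (auto simp: Ep2_def)
lemma sub_Up2: "Up2 \<subseteq> {..<3}" by (auto simp: Up2_def)
lemma sub_Ep3: "Ep3 \<subseteq> {(a,b). a < b \<and> b < 9}" by (auto simp: Ep3_def)
lemma sub_Ep4: "Ep4 \<subseteq> {(a,b). a < b \<and> b < 11}" by (auto simp: Ep4_def)
lemma sub_Up4: "Up4 \<subseteq> {..<11}" by (auto simp: Up4_def)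

lemma eps_lim:
  "(\<lambda>n::nat. real n * (2 * real n powr (-24/25)) / real n powr (1/10)
     + real n ^ 3 * ((real n powr (-2/3)) ^ 2 * (2 * real n powr (-24/25)) ^ 2)
     + real n ^ 9 * ((real n powr (-2/3)) ^ 14 * (2 * real n powr (-24/25)) ^ 0)
     + real n ^ 11 * ((real n powr (-2/3)) ^ 10 * (2 * real n powr (-24/25)) ^ 5)) \<longlonglongrightarrow> 0"
  by real_asymp

lemma ev_ln: "\<forall>\<^sub>F n in at_top. (10::real)^22 \<le> ln (real (n::nat))"
  by real_asymp



lemma good_bound:
  fixes n :: nat and C p \<alpha> :: real
  assumes n2: "n \<ge> 2" and C: "C \<ge> 20000" and plow: "C * ln (real n) / real n \<le> p"
    and pup: "p \<le> real n powr (-2/3)" and a0: "0 < \<alpha>" and a1: "\<alpha> \<le> 1/100"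
    and lnbig: "(10::real)^22 \<le> ln (real n)"
  shows "1 - (real n * (2 * real n powr (-24/25)) / real n powr (1/10)
     + real n ^ 3 * ((real n powr (-2/3)) ^ 2 * (2 * real n powr (-24/25)) ^ 2)
     + real n ^ 9 * ((real n powr (-2/3)) ^ 14 * (2 * real n powr (-24/25)) ^ 0)
     + real n ^ 11 * ((real n powr (-2/3)) ^ 10 * (2 * real n powr (-24/25)) ^ 5))
    \<le> measure_pmf.prob (gnp n p)
        {G. let B = high_deg n p \<alpha> G in
            real (card B) \<le> real n powr (1/10) \<and>
            (\<forall>v < n. card {w \<in> {..<n}. adj G v w \<and> w \<in> B \<union> ext_nbhd n G (B - {v})} \<le> 100) \<and>
            100 \<le> sqrt (2 * p * real n * ln (real n)) / 10^20}"
proof -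
  define M where "M = gnp n p"
  define q where "q = 2 * real n powr (-24/25)"
  define r where "r = real n powr (-2/3)"
  have n0: "real n > 0" using n2 by simp
  have L0: "ln (real n) > 0" using n2 by simp
  have p0: "p \<ge> 0"
  proof -
    have "C * ln (real n) / real n \<ge> 0" using C L0 n0 by simp
    thus ?thesis using plow by linarith
  qed
  have r1: "r \<le> 1"
  proof -
    have "real n powr (2/3) \<ge> 1" using n2 by (intro ge_one_powr_ge_zero) auto
    thus ?thesis unfolding r_def by (simp add: powr_minus divide_simps)
  qed
  have p1: "p \<le> 1" using pup r1 unfolding r_def by linarith
  have q0: "q \<ge> 0" unfolding q_def by simp
  have pr: "p ^ j \<le> r ^ j" for j using pup p0 unfolding r_def by (intro power_mono) auto
  have sq: "100 \<le> sqrt (2 * p * real n * ln (real n)) / 10^20"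
  proof -
    have pn: "p * real n \<ge> C * ln (real n)" using plow n0 by (simp add: pos_divide_le_eq mult.commute)
    have "ln (real n) ^ 2 \<le> 2 * (C * ln (real n)) * ln (real n)"
      using C L0 by (simp add: power2_eq_square mult_right_mono)
    also have "\<dots> \<le> 2 * (p * real n) * ln (real n)" using pn L0 by (simp add: mult_right_mono)
    finally have "ln (real n) ^ 2 \<le> 2 * p * real n * ln (real n)" by (simp add: mult.assoc mult.commute mult.left_commute)
    hence "sqrt (ln (real n) ^ 2) \<le> sqrt (2 * p * real n * ln (real n))" by (rule real_sqrt_le_mono)
    hence "ln (real n) \<le> sqrt (2 * p * real n * ln (real n))" using L0 by simp
    thus ?thesis using lnbig by simp
  qed
  define E1 where "E1 = {G. \<not> real (card (high_deg n p \<alpha> G)) \<le> real n powr (1/10)}"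
  define E2 where "E2 = {G. \<exists>xs. distinct xs \<and> set xs \<subseteq> {..<n} \<and> length xs = 3 \<and>
        (\<forall>(a,b)\<in>Ep2. G {xs!a, xs!b}) \<and> (\<forall>j\<in>Up2. xs!j \<in> high_deg n p \<alpha> G)}"
  define E3 where "E3 = {G. \<exists>xs. distinct xs \<and> set xs \<subseteq> {..<n} \<and> length xs = 9 \<and>
        (\<forall>(a,b)\<in>Ep3. G {xs!a, xs!b}) \<and> (\<forall>j\<in>{}. xs!j \<in> high_deg n p \<alpha> G)}"
  define E4 where "E4 = {G. \<exists>xs. distinct xs \<and> set xs \<subseteq> {..<n} \<and> length xs = 11 \<and>
        (\<forall>(a,b)\<in>Ep4. G {xs!a, xs!b}) \<and> (\<forall>j\<in>Up4. xs!j \<in> high_deg n p \<alpha> G)}"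
  define good where "good = {G. let B = high_deg n p \<alpha> G in
            real (card B) \<le> real n powr (1/10) \<and>
            (\<forall>v < n. card {w \<in> {..<n}. adj G v w \<and> w \<in> B \<union> ext_nbhd n G (B - {v})} \<le> 100) \<and>
            100 \<le> sqrt (2 * p * real n * ln (real n)) / 10^20}"
  have P1: "measure_pmf.prob M E1 \<le> real n * q / real n powr (1/10)"
    unfolding M_def E1_def q_def by (rule markov_B[OF n2 C plow p1 a0 a1])
  have P2: "measure_pmf.prob M E2 \<le> real n ^ 3 * (r ^ 2 * q ^ 2)"
  proof -
    have "measure_pmf.prob M E2 \<le> real n ^ 3 * (p ^ card Ep2 * q ^ card Up2)"
      unfolding M_def E2_def q_def by (rule union_pattern[OF _ sub_Ep2 sub_Up2 n2 C plow p1 a0 a1]) simp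
    also have "\<dots> \<le> real n ^ 3 * (r ^ 2 * q ^ 2)"
      unfolding card_Ep2 card_Up2 using pr[of 2] q0 by (intro mult_left_mono mult_right_mono) auto
    finally show ?thesis .
  qed
  have P3: "measure_pmf.prob M E3 \<le> real n ^ 9 * (r ^ 14 * q ^ 0)"
  proof -
    have "measure_pmf.prob M E3 \<le> real n ^ 9 * (p ^ card Ep3 * q ^ card ({}::nat set))"
      unfolding M_def E3_def q_def by (rule union_pattern[OF _ sub_Ep3 _ n2 C plow p1 a0 a1]) simp_all
    also have "\<dots> \<le> real n ^ 9 * (r ^ 14 * q ^ 0)"
      unfolding card_Ep3 using pr[of 14] q0 by (intro mult_left_mono mult_right_mono) auto
    finally show ?thesis .
  qed
  have P4: "measure_pmf.prob M E4 \<le> real n ^ 11 * (r ^ 10 * q ^ 5)"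
  proof -
    have "measure_pmf.prob M E4 \<le> real n ^ 11 * (p ^ card Ep4 * q ^ card Up4)"
      unfolding M_def E4_def q_def by (rule union_pattern[OF _ sub_Ep4 sub_Up4 n2 C plow p1 a0 a1]) simp
    also have "\<dots> \<le> real n ^ 11 * (r ^ 10 * q ^ 5)"
      unfolding card_Ep4 card_Up4 using pr[of 10] q0 by (intro mult_left_mono mult_right_mono) auto
    finally show ?thesis .
  qed
  have sub: "UNIV - (E1 \<union> E2 \<union> E3 \<union> E4) \<subseteq> good"
  proof
    fix G assume G: "G \<in> UNIV - (E1 \<union> E2 \<union> E3 \<union> E4)"
    have Bn: "high_deg n p \<alpha> G \<subseteq> {..<n}" unfolding high_deg_def by auto
    have no2: "\<not>(\<exists>xs. distinct xs \<and> set xs \<subseteq> {..<n} \<and> length xs = 3 \<and> (\<forall>(a,b)\<in>Ep2. G {xs!a, xs!b}) \<and> (\<forall>j\<in>Up2. xs!j \<in> high_deg n p \<alpha> G))"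
      using G unfolding E2_def by blast
    have no3: "\<not>(\<exists>xs. distinct xs \<and> set xs \<subseteq> {..<n} \<and> length xs = 9 \<and> (\<forall>(a,b)\<in>Ep3. G {xs!a, xs!b}))"
      using G unfolding E3_def by blast
    have no4: "\<not>(\<exists>xs. distinct xs \<and> set xs \<subseteq> {..<n} \<and> length xs = 11 \<and> (\<forall>(a,b)\<in>Ep4. G {xs!a, xs!b}) \<and> (\<forall>j\<in>Up4. xs!j \<in> high_deg n p \<alpha> G))"
      using G unfolding E4_def by blast
    have c1: "real (card (high_deg n p \<alpha> G)) \<le> real n powr (1/10)" using G unfolding E1_def by blast
    have c2: "\<forall>v < n. card {w \<in> {..<n}. adj G v w \<and> w \<in> high_deg n p \<alpha> G \<union> ext_nbhd n G (high_deg n p \<alpha> G - {v})} \<le> 100"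
      using main_det[OF no2 no3 no4 _ Bn] by blast
    show "G \<in> good" unfolding good_def Let_def using c1 c2 sq by blast
  qed
  have "measure_pmf.prob M (E1 \<union> E2 \<union> E3 \<union> E4)
      \<le> measure_pmf.prob M E1 + measure_pmf.prob M E2 + measure_pmf.prob M E3 + measure_pmf.prob M E4"
  proof -
    have a: "measure_pmf.prob M (X \<union> Y) \<le> measure_pmf.prob M X + measure_pmf.prob M Y" for X Y
      by (rule measure_Un_le) auto
    show ?thesis using a[of "E1 \<union> E2 \<union> E3" E4] a[of "E1 \<union> E2" E3] a[of E1 E2] by linarith
  qed
  also have "\<dots> \<le> real n * q / real n powr (1/10) + real n ^ 3 * (r ^ 2 * q ^ 2)
      + real n ^ 9 * (r ^ 14 * q ^ 0) + real n ^ 11 * (r ^ 10 * q ^ 5)"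
    using P1 P2 P3 P4 by linarith
  finally have U: "measure_pmf.prob M (E1 \<union> E2 \<union> E3 \<union> E4) \<le> \<dots>" .
  have "measure_pmf.prob M (UNIV - (E1 \<union> E2 \<union> E3 \<union> E4)) = 1 - measure_pmf.prob M (E1 \<union> E2 \<union> E3 \<union> E4)"
    using measure_pmf.prob_compl[of "E1 \<union> E2 \<union> E3 \<union> E4" M] by simp
  moreover have "measure_pmf.prob M (UNIV - (E1 \<union> E2 \<union> E3 \<union> E4)) \<le> measure_pmf.prob M good"
    by (rule measure_pmf.finite_measure_mono[OF sub]) simp
  ultimately show ?thesis using U unfolding M_def good_def q_def r_def by linarith
qed

theorem proposition3p8:
  "\<exists>C0 > 0. \<forall>C \<ge> C0. \<forall>\<alpha>::real. \<forall>p :: nat \<Rightarrow> real.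
     0 < \<alpha> \<and> \<alpha> \<le> 1/100 \<and>
     (\<forall>\<^sub>F n in at_top. C * ln (real n) / real n \<le> p n \<and> p n \<le> real n powr (-2/3)) \<longrightarrow>
     ((\<lambda>n. measure_pmf.prob (gnp n (p n))
        {G. let B = high_deg n (p n) \<alpha> G in
            real (card B) \<le> real n powr (1/10) \<and>
            (\<forall>v < n. card {w \<in> {..<n}. adj G v w \<and> w \<in> B \<union> ext_nbhd n G (B - {v})} \<le> 100) \<and>
            100 \<le> sqrt (2 * p n * real n * ln (real n)) / 10^20})
      \<longlonglongrightarrow> 1)"
proof (intro exI[of _ "20000::real"] conjI allI impI)
  fix C \<alpha> :: real and p :: "nat \<Rightarrow> real"
  assume C: "C \<ge> 20000"
  assume h: "0 < \<alpha> \<and> \<alpha> \<le> 1/100 \<and>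
     (\<forall>\<^sub>F n in at_top. C * ln (real n) / real n \<le> p n \<and> p n \<le> real n powr (-2/3))"
  define eps where "eps n = real n * (2 * real n powr (-24/25)) / real n powr (1/10)
     + real n ^ 3 * ((real n powr (-2/3)) ^ 2 * (2 * real n powr (-24/25)) ^ 2)
     + real n ^ 9 * ((real n powr (-2/3)) ^ 14 * (2 * real n powr (-24/25)) ^ 0)
     + real n ^ 11 * ((real n powr (-2/3)) ^ 10 * (2 * real n powr (-24/25)) ^ 5)" for n :: nat
  define P where "P n = measure_pmf.prob (gnp n (p n))
        {G. let B = high_deg n (p n) \<alpha> G in
            real (card B) \<le> real n powr (1/10) \<and>
            (\<forall>v < n. card {w \<in> {..<n}. adj G v w \<and> w \<in> B \<union> ext_nbhd n G (B - {v})} \<le> 100) \<and>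
            100 \<le> sqrt (2 * p n * real n * ln (real n)) / 10^20}" for n
  have e0: "(\<lambda>n. 1 - eps n) \<longlonglongrightarrow> 1 - 0"
    unfolding eps_def by (intro tendsto_diff tendsto_const eps_lim)
  have ev: "\<forall>\<^sub>F n in at_top. 1 - eps n \<le> P n"
  proof -
    have "\<forall>\<^sub>F n in at_top. (C * ln (real n) / real n \<le> p n \<and> p n \<le> real n powr (-2/3))
        \<and> n \<ge> 2 \<and> (10::real)^22 \<le> ln (real n)"
      using eventually_conj[OF conjunct2[OF conjunct2[OF h]] eventually_conj[OF eventually_ge_at_top[of "2::nat"] ev_ln]] .
    thus ?thesis
    proof (rule eventually_mono)
      fix n assume hn: "(C * ln (real n) / real n \<le> p n \<and> p n \<le> real n powr (-2/3))
        \<and> n \<ge> 2 \<and> (10::real)^22 \<le> ln (real n)"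
      show "1 - eps n \<le> P n" unfolding eps_def P_def
        by (rule good_bound) (use hn C h in auto)
    qed
  qed
  have le1: "\<forall>\<^sub>F n in at_top. P n \<le> 1" unfolding P_def by simp
  show "P \<longlonglongrightarrow> 1"
    using tendsto_sandwich[OF ev le1 _ tendsto_const] e0 by simp
qed simp


end
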